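(* Let $n \ge 2$, $L\ge 1$, let $\Lambda^l\subseteq[n]$ for $l\in[L]$, put $\Lambda:=\bigcup_{l\in[L]}\Lambda^l$, and let $\mathcal{A}_k^l$ be the Snuffy sparsity patterns $$\mathcal{A}_k^l = \{k\} \cup \begin{cases} [n] & \text{if } k \in \Lambda^l,\\ \Lambda^l & \text{otherwise.}\end{cases}$$ Suppose $|\Lambda| \ge \frac{n-1}{2}$. Then: (1) $k\in\mathcal{A}_k^l$ for all $k\in[n]$, $l\in[L]$; (2) there is a permutation $\gamma$ of $[n]$ such that for all $i\in[n-1]$, $\gamma(i)\in\bigcup_{l=1}^{L}\mathcal{A}^l_{\gamma(i+1)}$; (3) the directed graph on $[n]$ with an arc $k\to j$ whenever $j\in\mathcal{A}_k^l$ for some $l\in[L]$ is strongly connected (every patch attends to every other patch, directly or indirectly), and in fact any two vertices are joined by a directed path of length at most $2$.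
   Context: $[a]=\{1,\dots,a\}$. The set $\mathcal{A}_k^l$ is the set of patches that patch $k$ attends to in layer $l$ of a sparse transformer. Conditions (1)–(3) are the sufficient conditions (from prior work) for a sparse transformer with a softmax-type probability map to be a universal approximator of sequence-to-sequence functions. *)

theory Defs
  imports Complex_Main
begin

definition snuffy :: "nat \<Rightarrow> (nat \<Rightarrow> nat set) \<Rightarrow> nat \<Rightarrow> nat \<Rightarrow> nat set" where
  "snuffy n Lam k l = {k} \<union> (if k \<in> Lam l then {1..n} else Lam l)"

definition snuffy_arc :: "nat \<Rightarrow> nat \<Rightarrow> (nat \<Rightarrow> nat set) \<Rightarrow> nat \<Rightarrow> nat \<Rightarrow> bool" where
  "snuffy_arc n L Lam k j \<longleftrightarrow> k \<in> {1..n} \<and> j \<in> {1..n} \<and> (\<exists>l\<in>{1..L}. j \<in> snuffy n Lam k l)"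

end

theory Submission
  imports Defs
begin

fun okl :: "('a \<Rightarrow> bool) \<Rightarrow> 'a list \<Rightarrow> bool" where
  "okl P (x#y#zs) = ((P x \<or> P y) \<and> okl P (y#zs))"
| "okl P _ = True"

lemma okl_nth: "okl P xs \<Longrightarrow> Suc i < length xs \<Longrightarrow> P (xs!i) \<or> P (xs!Suc i)"
proof (induction P xs arbitrary: i rule: okl.induct)
  case (1 P x y zs)
  then show ?case by (cases i) auto
qed auto

lemma okl_cons: "P x \<Longrightarrow> okl P ys \<Longrightarrow> okl P (x#ys)"
  by (cases ys) auto

fun alt :: "'a list \<Rightarrow> 'a list \<Rightarrow> 'a list" where
  "alt (b#bs) (a#as) = b # a # alt bs as"
| "alt bs as = bs @ as"

lemma alt_set: "set (alt bs as) = set bs \<union> set as"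
  by (induction bs as rule: alt.induct) auto

lemma alt_len: "length (alt bs as) = length bs + length as"
  by (induction bs as rule: alt.induct) auto

lemma alt_distinct: "distinct bs \<Longrightarrow> distinct as \<Longrightarrow> set bs \<inter> set as = {} \<Longrightarrow> distinct (alt bs as)"
  by (induction bs as rule: alt.induct) (auto simp: alt_set)

lemma okl_all: "\<forall>x\<in>set xs. P x \<Longrightarrow> okl P xs"
  by (induction P xs rule: okl.induct) auto

lemma okl_short: "length xs \<le> 1 \<Longrightarrow> okl P xs"
  by (induction P xs rule: okl.induct) auto

lemma alt_ok: "set as \<subseteq> A \<Longrightarrow> length bs \<le> length as + 1 \<Longrightarrow> okl (\<lambda>x. x \<in> A) (alt bs as)"
proof (induction bs as rule: alt.induct)
  case (1 b bs a as)
  then have "okl (\<lambda>x. x \<in> A) (a # alt bs as)" by (intro okl_cons) auto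
  then show ?case using "1.prems" by simp
next
  case ("2_1" as)
  then show ?case by (simp add: okl_all subset_iff)
next
  case ("2_2" bs)
  then show ?case by (intro okl_short) simp
qed

theorem mainTheorem2:
  fixes n L :: nat and Lam :: "nat \<Rightarrow> nat set"
  assumes "n \<ge> 2" and "L \<ge> 1"
    and "\<And>l. l \<in> {1..L} \<Longrightarrow> Lam l \<subseteq> {1..n}"
    and "real (card (\<Union>l\<in>{1..L}. Lam l)) \<ge> (real n - 1) / 2"
  shows "(\<forall>k\<in>{1..n}. \<forall>l\<in>{1..L}. k \<in> snuffy n Lam k l)
     \<and> (\<exists>\<gamma>. bij_betw \<gamma> {1..n} {1..n} \<and>
          (\<forall>i\<in>{1..n-1}. \<gamma> i \<in> (\<Union>l\<in>{1..L}. snuffy n Lam (\<gamma> (i+1)) l)))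
     \<and> (\<forall>k\<in>{1..n}. \<forall>j\<in>{1..n}. (k, j) \<in> {(a, b). snuffy_arc n L Lam a b}\<^sup>*)
     \<and> (\<forall>k\<in>{1..n}. \<forall>j\<in>{1..n}. snuffy_arc n L Lam k j \<or>
          (\<exists>m\<in>{1..n}. snuffy_arc n L Lam k m \<and> snuffy_arc n L Lam m j))"
proof -
  define U where "U = (\<Union>l\<in>{1..L}. Lam l)"
  have Usub: "U \<subseteq> {1..n}" using assms(3) unfolding U_def by blast
  have fU: "finite U" using Usub finite_subset by blast
  have "real n \<le> 2 * real (card U) + 1" using assms(4) unfolding U_def[symmetric] by (simp add: field_simps)
  then have cU: "2 * card U + 1 \<ge> n" by linarith
  have Une: "U \<noteq> {}" using cU assms(1) by auto
  define B where "B = {1..n} - U"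
  have cB: "card B = n - card U" unfolding B_def using Usub fU by (simp add: card_Diff_subset)
  define bs where "bs = sorted_list_of_set B"
  define as where "as = sorted_list_of_set U"
  define xs where "xs = alt bs as"
  have lens: "length bs \<le> length as + 1" unfolding bs_def as_def using cB cU by simp
  have dxs: "distinct xs" unfolding xs_def bs_def as_def
    by (rule alt_distinct) (auto simp: B_def fU)
  have sxs: "set xs = {1..n}" unfolding xs_def bs_def as_def using Usub fU
    by (auto simp: alt_set B_def)
  have lxs: "length xs = n" using distinct_card[OF dxs] sxs by simp
  have okx: "okl (\<lambda>x. x \<in> U) xs" unfolding xs_def
    by (rule alt_ok) (use lens fU in \<open>auto simp: as_def\<close>)
  have P1: "\<forall>k\<in>{1..n}. \<forall>l\<in>{1..L}. k \<in> snuffy n Lam k l" by (simp add: snuffy_def)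
  have two: "\<forall>k\<in>{1..n}. \<forall>j\<in>{1..n}. snuffy_arc n L Lam k j \<or>
          (\<exists>m\<in>{1..n}. snuffy_arc n L Lam k m \<and> snuffy_arc n L Lam m j)"
  proof (intro ballI)
    fix k j assume k: "k \<in> {1..n}" and j: "j \<in> {1..n}"
    obtain m where m: "m \<in> U" using Une by blast
    then obtain l where l: "l \<in> {1..L}" "m \<in> Lam l" unfolding U_def by blast
    have mn: "m \<in> {1..n}" using m Usub by blast
    have amj: "snuffy_arc n L Lam m j" unfolding snuffy_arc_def snuffy_def using l mn j by auto
    show "snuffy_arc n L Lam k j \<or>
          (\<exists>m\<in>{1..n}. snuffy_arc n L Lam k m \<and> snuffy_arc n L Lam m j)"
    proof (cases "k \<in> Lam l")
      case True
      then have "snuffy_arc n L Lam k j" unfolding snuffy_arc_def snuffy_def using l k j by auto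
      then show ?thesis by blast
    next
      case False
      then have "snuffy_arc n L Lam k m" unfolding snuffy_arc_def snuffy_def using l k mn by auto
      then show ?thesis using amj mn by blast
    qed
  qed
  have three: "\<forall>k\<in>{1..n}. \<forall>j\<in>{1..n}. (k, j) \<in> {(a, b). snuffy_arc n L Lam a b}\<^sup>*"
  proof (intro ballI)
    fix k j assume k: "k \<in> {1..n}" and j: "j \<in> {1..n}"
    let ?R = "{(a, b). snuffy_arc n L Lam a b}"
    from two k j consider "snuffy_arc n L Lam k j" | m where "snuffy_arc n L Lam k m" "snuffy_arc n L Lam m j"
      by blast
    then show "(k, j) \<in> ?R\<^sup>*"
    proof cases
      case 1 then show ?thesis by (intro r_into_rtrancl) simp
    next
      case (2 m)
      then have "(k, m) \<in> ?R" "(m, j) \<in> ?R" by simp_all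
      then show ?thesis by (meson r_into_rtrancl rtrancl_into_rtrancl)
    qed
  qed
  define g where "g = (\<lambda>i. xs ! (i - 1))"
  have bij: "bij_betw g {1..n} {1..n}"
  proof (rule bij_betw_imageI)
    show "inj_on g {1..n}"
    proof (rule inj_onI)
      fix x y assume "x \<in> {1..n}" "y \<in> {1..n}" "g x = g y"
      then have "x - 1 = y - 1" using nth_eq_iff_index_eq[OF dxs, of "x-1" "y-1"] lxs
        unfolding g_def by auto
      then show "x = y" using \<open>x \<in> {1..n}\<close> \<open>y \<in> {1..n}\<close> by auto
    qed
    show "g ` {1..n} = {1..n}"
    proof
      show "g ` {1..n} \<subseteq> {1..n}"
      proof
        fix y assume "y \<in> g ` {1..n}"
        then obtain i where i: "i \<in> {1..n}" "y = xs ! (i - 1)" unfolding g_def by blast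
        then have "i - 1 < length xs" using lxs by auto
        then have "xs ! (i - 1) \<in> set xs" by (rule nth_mem)
        then show "y \<in> {1..n}" using i sxs by simp
      qed
      show "{1..n} \<subseteq> g ` {1..n}"
      proof
        fix y assume "y \<in> {1..n}"
        then obtain i where i: "i < n" "xs ! i = y" using sxs lxs by (metis in_set_conv_nth)
        then have "g (i+1) = y" "i + 1 \<in> {1..n}" unfolding g_def by auto
        then show "y \<in> g ` {1..n}" by (metis image_eqI)
      qed
    qed
  qed
  have adj: "\<forall>i\<in>{1..n-1}. g i \<in> (\<Union>l\<in>{1..L}. snuffy n Lam (g (i+1)) l)"
  proof
    fix i assume i: "i \<in> {1..n-1}"
    have gi: "g i = xs ! (i-1)" "g (i+1) = xs ! Suc (i-1)" using i unfolding g_def by auto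
    have lt: "Suc (i-1) < length xs" using i lxs by auto
    have gin: "g i \<in> {1..n}" "g (i+1) \<in> {1..n}" using gi lt lxs sxs nth_mem
      by (metis Suc_lessD)+
    from okl_nth[OF okx lt] have "g i \<in> U \<or> g (i+1) \<in> U" using gi by simp
    then show "g i \<in> (\<Union>l\<in>{1..L}. snuffy n Lam (g (i+1)) l)"
    proof
      assume "g (i+1) \<in> U"
      then obtain l where "l \<in> {1..L}" "g (i+1) \<in> Lam l" unfolding U_def by blast
      then show ?thesis using gin unfolding snuffy_def by auto
    next
      assume "g i \<in> U"
      then obtain l where l: "l \<in> {1..L}" "g i \<in> Lam l" unfolding U_def by blast
      then show ?thesis using gin unfolding snuffy_def by (cases "g (i+1) \<in> Lam l") auto
    qed
  qed
  show ?thesis using P1 bij adj three two by blast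
qed

end
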